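(* The set-valued return function $V$ is a generalized contingent solution for (MOC).
   Context: Setting (MOC). Fix $T>0$, $I=[0,T]$, integers $n,m,p\ge1$, nonempty compact $U\subset\mathbb{R}^m$. $f:\mathbb{R}^n\times U\to\mathbb{R}^n$ continuous with $\|f(x_1,u)-f(x_2,u)\|\le K_f\|x_1-x_2\|$, $\|f(x,u)\|\le M_f$. $L:\mathbb{R}^n\times U\to\mathbb{R}^p$ continuous with $\|L(x,u)\|\le M_L$, $\|L(x_1,u)-L(x_2,u)\|\le K_L\|x_1-x_2\|$. Controls $\mathcal{U}$: bounded measurable $u:I\to U$. $x(s;t,x,u)$ solves $\dot x=f(x,u(s))$ on $[t,T]$, $x(t)=x$; $J(t,t',x,u)=\int_t^{t'}L(x(s;t,x,u),u(s))ds$; $Y(t,x)=\{J(t,T,x,u):u\in\mathcal{U}\}$. Euclidean norms. $P\subset\mathbb{R}^p$: closed convex pointed cone containing $0$ with nonempty interior; $\mathcal{E}(S,P)=\{y\in S:(y-P)\cap S=\{y\}\}$; $V(t,x)=\mathcal{E}(\mathrm{cl}\,Y(t,x),P)$; $W_\uparrow(t,x)=W(t,x)+P$. Extremal element map: for all $(t,x)$, $y\in W(t,x)$: $W(t,x)\cap(y-P)=\{y\}=W(t,x)\cap(y+P)$. $(\mathrm{FL})(x)=\mathrm{cl}\,\mathrm{co}\{(f(x,u),L(x,u)):u\in U\}$. Contingent cone $T_S(z)=\{v:\exists h_k\to0^+,\exists v_k\to v,z+h_kv_k\in S\}$; contingent derivative $DF(z,y)$ has graph $T_{\mathrm{gph}F}(z,y)$,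 value at $v$ written $DF((z,y);v)$. Generalized contingent solution: an extremal element map $W$ with (i) for all $(t,x)\in[0,T)\times\mathbb{R}^n$, $y\in W(t,x)$, some $(\bar f,\bar L)\in(\mathrm{FL})(x)$ satisfies $-\bar L\in DW_\uparrow((t,x,y);(1,\bar f))$; (ii) for all $(t,x)\in(0,T]\times\mathbb{R}^n$, $y\in W(t,x)$, $(f,L)\in(\mathrm{FL})(x)$: $L\in DW_\uparrow((t,x,y);(-1,-f))$; (iii) $W(T,x)=\{0\}$ for all $x$. *)

theory Defs
  imports "HOL-Analysis.Analysis"
begin

definition controls :: "real \<Rightarrow> ('m::euclidean_space) set \<Rightarrow> (real \<Rightarrow> 'm) set" where
  "controls T U = {u. (\<forall>s\<in>{0..T}. u s \<in> U) \<and> bounded (u ` {0..T})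
                      \<and> u \<in> borel_measurable (lebesgue_on {0..T})}"

text \<open>y is a (Caratheodory) solution of dx/ds = f(x,u(s)) on [t,T] with y(t) = x,
  written in integral form.\<close>
definition is_traj :: "real \<Rightarrow> ('n::euclidean_space \<Rightarrow> 'm \<Rightarrow> 'n) \<Rightarrow> real \<Rightarrow> 'n
      \<Rightarrow> (real \<Rightarrow> 'm) \<Rightarrow> (real \<Rightarrow> 'n) \<Rightarrow> bool" where
  "is_traj T f t x u y \<longleftrightarrow>
     (\<forall>s\<in>{t..T}. ((\<lambda>r. f (y r) (u r)) has_integral (y s - x)) {t..s})"

definition Yset :: "real \<Rightarrow> 'm set \<Rightarrow> ('n::euclidean_space \<Rightarrow> 'm::euclidean_space \<Rightarrow> 'n)
      \<Rightarrow> ('n \<Rightarrow> 'm \<Rightarrow> 'p::euclidean_space) \<Rightarrow> real \<Rightarrow> 'n \<Rightarrow> 'p set" where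
  "Yset T U f L t x = {j. \<exists>u\<in>controls T U. \<exists>y. is_traj T f t x u y
                          \<and> ((\<lambda>s. L (y s) (u s)) has_integral j) {t..T}}"

definition eff :: "'p::real_vector set \<Rightarrow> 'p set \<Rightarrow> 'p set" where
  "eff S P = {y \<in> S. ((\<lambda>q. y - q) ` P) \<inter> S = {y}}"

definition Vmap :: "real \<Rightarrow> 'm set \<Rightarrow> ('n::euclidean_space \<Rightarrow> 'm::euclidean_space \<Rightarrow> 'n)
      \<Rightarrow> ('n \<Rightarrow> 'm \<Rightarrow> 'p::euclidean_space) \<Rightarrow> 'p set \<Rightarrow> real \<Rightarrow> 'n \<Rightarrow> 'p set" where
  "Vmap T U f L P t x = eff (closure (Yset T U f L t x)) P"

definition upper :: "(real \<Rightarrow> 'n \<Rightarrow> 'p::real_vector set) \<Rightarrow> 'p set \<Rightarrow> real \<Rightarrow> 'n \<Rightarrow> 'p set" where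
  "upper W P t x = {w + q | w q. w \<in> W t x \<and> q \<in> P}"

definition contingent_cone :: "'a::real_normed_vector set \<Rightarrow> 'a \<Rightarrow> 'a set" where
  "contingent_cone S z = {v. \<exists>h vs. (\<forall>k. h k > 0) \<and> h \<longlonglongrightarrow> 0 \<and> vs \<longlonglongrightarrow> v
                                 \<and> (\<forall>k. z + h k *\<^sub>R vs k \<in> S)}"

definition graph_on :: "real \<Rightarrow> (real \<Rightarrow> 'n \<Rightarrow> 'p set) \<Rightarrow> ((real \<times> 'n) \<times> 'p) set" where
  "graph_on T W = {((t, x), y). t \<in> {0..T} \<and> y \<in> W t x}"

definition cont_deriv :: "real \<Rightarrow> (real \<Rightarrow> 'n::real_normed_vector \<Rightarrow> 'p::real_normed_vector set)
      \<Rightarrow> (real \<times> 'n) \<Rightarrow> 'p \<Rightarrow> (real \<times> 'n) \<Rightarrow> 'p set" where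
  "cont_deriv T W z y v = {w. (v, w) \<in> contingent_cone (graph_on T W) (z, y)}"

definition FL :: "'m set \<Rightarrow> ('n::euclidean_space \<Rightarrow> 'm \<Rightarrow> 'n)
      \<Rightarrow> ('n \<Rightarrow> 'm \<Rightarrow> 'p::euclidean_space) \<Rightarrow> 'n \<Rightarrow> ('n \<times> 'p) set" where
  "FL U f L x = closure (convex hull {(f x u, L x u) | u. u \<in> U})"

definition extremal_element_map :: "real \<Rightarrow> (real \<Rightarrow> 'n \<Rightarrow> 'p::real_vector set) \<Rightarrow> 'p set \<Rightarrow> bool" where
  "extremal_element_map T W P \<longleftrightarrow>
     (\<forall>t\<in>{0..T}. \<forall>x. \<forall>y\<in>W t x.
        W t x \<inter> ((\<lambda>q. y - q) ` P) = {y} \<and> W t x \<inter> ((\<lambda>q. y + q) ` P) = {y})"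

definition gen_contingent_solution :: "real \<Rightarrow> 'm set \<Rightarrow> ('n::euclidean_space \<Rightarrow> 'm \<Rightarrow> 'n)
      \<Rightarrow> ('n \<Rightarrow> 'm \<Rightarrow> 'p::euclidean_space) \<Rightarrow> 'p set \<Rightarrow> (real \<Rightarrow> 'n \<Rightarrow> 'p set) \<Rightarrow> bool" where
  "gen_contingent_solution T U f L P W \<longleftrightarrow>
     extremal_element_map T W P
   \<and> (\<forall>t\<in>{0..<T}. \<forall>x. \<forall>y\<in>W t x. \<exists>(fb, Lb)\<in>FL U f L x.
          - Lb \<in> cont_deriv T (upper W P) (t, x) y (1, fb))
   \<and> (\<forall>t\<in>{0<..T}. \<forall>x. \<forall>y\<in>W t x. \<forall>(fb, Lb)\<in>FL U f L x.
          Lb \<in> cont_deriv T (upper W P) (t, x) y (-1, - fb))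
   \<and> (\<forall>x. W T x = {0})"

end

theory Submission
  imports Defs
begin

lemma lip_cont:
  fixes g :: "'a::real_normed_vector \<Rightarrow> 'b::real_normed_vector"
  assumes "\<And>v w. norm (g v - g w) \<le> K * norm (v - w)" "0 \<le> K"
  shows "continuous_on S g"
proof -
  have "\<exists>d>0. \<forall>v'. dist v' v < d \<longrightarrow> dist (g v') (g v) < e" if "e > 0" for v e
  proof (intro exI conjI allI impI)
    show "0 < e / (K + 1)" using that assms(2) by simp
    fix v' assume "dist v' v < e / (K+1)"
    hence "K * dist v' v \<le> K * (e/(K+1))" using assms(2) by (intro mult_left_mono) auto
    also have "\<dots> < e" using that assms(2) by (simp add: field_simps)
    finally show "dist (g v') (g v) < e" using assms(1)[of v' v] by (simp add: dist_norm)
  qed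
  then show ?thesis
    by (metis continuous_at_imp_continuous_on continuous_at_eps_delta)
qed

lemma hib:
  fixes f :: "real \<Rightarrow> 'b::real_normed_vector"
  assumes "0 \<le> B" "(f has_integral i) {a..b}" "\<And>x. x \<in> {a..b} \<Longrightarrow> norm (f x) \<le> B" "a \<le> b"
  shows "norm i \<le> B * (b - a)"
  using has_integral_bound[of B f i a b] assms by auto

lemma backward_ode:
  fixes g :: "'a::euclidean_space \<Rightarrow> 'a"
  assumes ab: "a \<le> b" and gM: "\<And>v. norm (g v) \<le> M"
    and gK: "\<And>v w. norm (g v - g w) \<le> K * norm (v - w)" and K0: "0 \<le> K"
    and small: "(b - a) * K < 1"
  shows "\<exists>w. continuous_on {a..b} w \<and> (\<forall>\<sigma>\<in>{a..b}. ((\<lambda>r. g (w r)) has_integral (x - w \<sigma>)) {\<sigma>..b})"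
proof -
  have gc: "continuous_on S g" for S using lip_cont[OF gK K0] .
  define cl where "cl \<sigma> = max a (min b \<sigma>)" for \<sigma>
  have cl_in: "cl \<sigma> \<in> {a..b}" for \<sigma> using ab by (auto simp: cl_def)
  have clc: "continuous_on UNIV cl" unfolding cl_def by (intro continuous_intros)
  have M0: "0 \<le> M" using gM[of 0] norm_ge_zero order_trans by blast
  define F where "F \<phi> = (\<lambda>\<sigma>. x - integral {cl \<sigma>..b} (\<lambda>r. g (apply_bcontfun \<phi> r)))"
    for \<phi> :: "real \<Rightarrow>\<^sub>C 'a"
  have int: "(\<lambda>r. g (apply_bcontfun \<phi> r)) integrable_on {c..d}" for \<phi> :: "real \<Rightarrow>\<^sub>C 'a" and c d
    by (intro integrable_continuous_interval continuous_on_compose2[OF gc[of UNIV]]) auto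
  have Fb: "F \<phi> \<in> bcontfun" for \<phi>
  proof (rule bcontfun_normI)
    have "continuous_on {a..b} (\<lambda>c. integral {c..b} (\<lambda>r. g (apply_bcontfun \<phi> r)))"
      by (rule indefinite_integral_continuous_1'[OF int])
    hence "continuous_on UNIV (\<lambda>\<sigma>. integral {cl \<sigma>..b} (\<lambda>r. g (apply_bcontfun \<phi> r)))"
      using continuous_on_compose2[OF _ clc, of "{a..b}"] cl_in by blast
    thus "continuous_on UNIV (F \<phi>)" unfolding F_def by (intro continuous_intros)
    fix \<sigma>
    have "norm (integral {cl \<sigma>..b} (\<lambda>r. g (apply_bcontfun \<phi> r))) \<le> M * (b - cl \<sigma>)"
      using hib[OF M0 integrable_integral[OF int]] gM cl_in[of \<sigma>] by auto
    also have "\<dots> \<le> M * (b - a)" using cl_in[of \<sigma>] M0 by (auto intro!: mult_left_mono)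
    finally show "norm (F \<phi> \<sigma>) \<le> norm x + M * (b - a)"
      unfolding F_def by (smt (verit) norm_triangle_ineq4)
  qed
  define \<Phi> where "\<Phi> \<phi> = Bcontfun (F \<phi>)" for \<phi>
  have Phi_app: "apply_bcontfun (\<Phi> \<phi>) = F \<phi>" for \<phi>
    unfolding \<Phi>_def using Fb by (simp add: Bcontfun_inverse)
  have contr: "dist (\<Phi> \<phi>) (\<Phi> \<psi>) \<le> ((b - a) * K) * dist \<phi> \<psi>" for \<phi> \<psi>
  proof (rule dist_bound)
    fix \<sigma>
    let ?h = "\<lambda>r. g (apply_bcontfun \<phi> r) - g (apply_bcontfun \<psi> r)"
    have hi: "(?h has_integral (integral {cl \<sigma>..b} (\<lambda>r. g (apply_bcontfun \<phi> r)) - integral {cl \<sigma>..b} (\<lambda>r. g (apply_bcontfun \<psi> r)))) {cl \<sigma>..b}"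
      by (intro has_integral_diff integrable_integral int)
    have hb: "norm (?h r) \<le> K * dist \<phi> \<psi>" for r
      using gK[of "apply_bcontfun \<phi> r" "apply_bcontfun \<psi> r"] dist_bounded[of \<phi> r \<psi>] K0
      by (smt (verit) dist_norm mult_left_mono)
    have "dist (apply_bcontfun (\<Phi> \<phi>) \<sigma>) (apply_bcontfun (\<Phi> \<psi>) \<sigma>)
        = norm (integral {cl \<sigma>..b} (\<lambda>r. g (apply_bcontfun \<phi> r)) - integral {cl \<sigma>..b} (\<lambda>r. g (apply_bcontfun \<psi> r)))"
      unfolding Phi_app F_def dist_norm by (simp add: norm_minus_commute)
    also have "\<dots> \<le> (K * dist \<phi> \<psi>) * (b - cl \<sigma>)"
      using hib[of "K * dist \<phi> \<psi>" ?h] hi hb K0 cl_in[of \<sigma>] by auto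
    also have "\<dots> \<le> (K * dist \<phi> \<psi>) * (b - a)" using cl_in[of \<sigma>] K0
      by (auto intro!: mult_left_mono)
    finally show "dist (apply_bcontfun (\<Phi> \<phi>) \<sigma>) (apply_bcontfun (\<Phi> \<psi>) \<sigma>) \<le> ((b - a) * K) * dist \<phi> \<psi>"
      by (simp add: algebra_simps)
  qed
  obtain w0 where w0: "\<Phi> w0 = w0"
    using banach_fix_type[of "(b - a) * K" \<Phi>] contr small ab K0 by auto
  show ?thesis
  proof (intro exI conjI ballI)
    show "continuous_on {a..b} (apply_bcontfun w0)" by simp
    fix \<sigma> assume s: "\<sigma> \<in> {a..b}"
    hence "cl \<sigma> = \<sigma>" by (auto simp: cl_def)
    hence "apply_bcontfun w0 \<sigma> = x - integral {\<sigma>..b} (\<lambda>r. g (apply_bcontfun w0 r))"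
      using w0 Phi_app[of w0] unfolding F_def by metis
    hence "integral {\<sigma>..b} (\<lambda>r. g (apply_bcontfun w0 r)) = x - apply_bcontfun w0 \<sigma>" by simp
    thus "((\<lambda>r. g (apply_bcontfun w0 r)) has_integral (x - apply_bcontfun w0 \<sigma>)) {\<sigma>..b}"
      using integrable_integral[OF int] by metis
  qed
qed

lemma int_point0: "((f::real \<Rightarrow> 'b::real_normed_vector) has_integral i) {c..c} \<Longrightarrow> i = 0"
  using has_integral_unique has_integral_refl(2) by (metis atLeastAtMost_singleton)

lemma ctrl_in: "u \<in> controls T U \<Longrightarrow> r \<in> {0..T} \<Longrightarrow> u r \<in> U"
  by (auto simp: controls_def)

locale moc =
  fixes T :: real and U :: "'m::euclidean_space set"
    and f :: "'n::euclidean_space \<Rightarrow> 'm \<Rightarrow> 'n"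
    and L :: "'n \<Rightarrow> 'm \<Rightarrow> 'p::euclidean_space"
    and Kf Mf KL BL :: real
  assumes T0: "T > 0" and U_ne: "U \<noteq> {}"
    and fK: "\<And>x1 x2 u. u \<in> U \<Longrightarrow> norm (f x1 u - f x2 u) \<le> Kf * norm (x1 - x2)"
    and fM: "\<And>x u. u \<in> U \<Longrightarrow> norm (f x u) \<le> Mf"
    and LB: "\<And>x u. u \<in> U \<Longrightarrow> norm (L x u) \<le> BL"
    and LK: "\<And>x1 x2 u. u \<in> U \<Longrightarrow> norm (L x1 u - L x2 u) \<le> KL * norm (x1 - x2)"
begin

lemma some_u: obtains u0 where "u0 \<in> U" using U_ne by blast

lemma Kf0: "0 \<le> Kf"
proof -
  obtain u0 where u0: "u0 \<in> U" by (rule some_u)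
  obtain b :: 'n where "b \<in> Basis" using nonempty_Basis by blast
  hence nb: "norm b > 0" by (auto simp: Basis_zero norm_not_less_zero intro: ccontr)
  have "0 \<le> Kf * norm (b - 0)" using fK[OF u0, of b 0] norm_ge_zero order_trans by blast
  thus ?thesis using nb by (simp add: zero_le_mult_iff)
qed

lemma KL0: "0 \<le> KL"
proof -
  obtain u0 where u0: "u0 \<in> U" by (rule some_u)
  obtain b :: 'n where "b \<in> Basis" using nonempty_Basis by blast
  hence nb: "norm b > 0" by (auto simp: Basis_zero norm_not_less_zero intro: ccontr)
  have "0 \<le> KL * norm (b - 0)" using LK[OF u0, of b 0] norm_ge_zero order_trans by blast
  thus ?thesis using nb by (simp add: zero_le_mult_iff)
qed

lemma Mf0: "0 \<le> Mf"
proof -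
  obtain u0 where u0: "u0 \<in> U" by (rule some_u)
  show ?thesis using fM[OF u0, of 0] norm_ge_zero[of "f 0 u0"] by linarith
qed

lemma BL0: "0 \<le> BL"
proof -
  obtain u0 where u0: "u0 \<in> U" by (rule some_u)
  show ?thesis using LB[OF u0, of 0] norm_ge_zero[of "L 0 u0"] by linarith
qed

lemma traj_bound:
  assumes "is_traj T f t x u z" "u \<in> controls T U" "0 \<le> t" "r \<in> {t..T}"
  shows "norm (z r - x) \<le> Mf * (r - t)"
proof -
  have "((\<lambda>q. f (z q) (u q)) has_integral (z r - x)) {t..r}" using assms by (auto simp: is_traj_def)
  hence "norm (z r - x) \<le> Mf * (r - t)"
  proof (rule hib[OF Mf0])
    fix q assume "q \<in> {t..r}"
    hence "u q \<in> U" using assms ctrl_in[of u T U q] by auto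
    thus "norm (f (z q) (u q)) \<le> Mf" by (rule fM)
  qed (use assms in auto)
  thus ?thesis .
qed

lemma traj_start:
  assumes "is_traj T f t x u z" "t \<le> T"
  shows "z t = x"
proof -
  have "((\<lambda>r. f (z r) (u r)) has_integral (z t - x)) {t..t}" using assms unfolding is_traj_def
    by (metis atLeastAtMost_iff order_refl)
  hence "z t - x = 0" by (rule int_point0)
  thus ?thesis by simp
qed

lemma back_step:
  assumes J: "J \<in> Yset T U f L t x" and a0: "0 \<le> t - s" and tT: "t \<le> T" and s0: "0 \<le> s"
    and sK: "s * Kf < 1" and u0: "u0 \<in> U"
  shows "\<exists>x' c. J + c \<in> Yset T U f L (t - s) x' \<and> norm (x' - x) \<le> Mf * s
     \<and> norm (x - x' - s *\<^sub>R f x u0) \<le> Kf * Mf * s\<^sup>2 \<and> norm (c - s *\<^sub>R L x u0) \<le> KL * Mf * s\<^sup>2"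
proof (cases "s = 0")
  case True
  then show ?thesis using J by (intro exI[of _ x] exI[of _ 0]) auto
next
  case False
  hence s: "s > 0" using s0 by simp
  from J obtain u z where u: "u \<in> controls T U" and z: "is_traj T f t x u z"
    and zJ: "((\<lambda>r. L (z r) (u r)) has_integral J) {t..T}"
    unfolding Yset_def by blast
  define a where "a = t - s"
  have at: "a < t" "0 \<le> a" using s a0 by (auto simp: a_def)
  define g where "g v = f v u0" for v
  obtain w where wc: "continuous_on {a..t} w"
    and wi: "\<And>\<sigma>. \<sigma> \<in> {a..t} \<Longrightarrow> ((\<lambda>r. g (w r)) has_integral (x - w \<sigma>)) {\<sigma>..t}"
    using backward_ode[of a t g Mf Kf x] fM[OF u0] fK[OF u0] Kf0 sK at
    unfolding g_def a_def by (auto simp: algebra_simps)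
  have wa: "((\<lambda>r. g (w r)) has_integral (x - w a)) {a..t}" using wi at by auto
  have wt: "w t = x" using wi[of t] at int_point0[of _ "x - w t" t] by auto
  have zt: "z t = x" using traj_start[OF z tT] .
  have gc: "continuous_on S g" for S unfolding g_def by (rule lip_cont[OF fK[OF u0] Kf0])
  have Lc: "continuous_on S (\<lambda>v. L v u0)" for S by (rule lip_cont[OF LK[OF u0] KL0])
  have wb: "norm (w r - x) \<le> Mf * s" if "r \<in> {a..t}" for r
  proof -
    have "norm (x - w r) \<le> Mf * (t - r)"
      using hib[OF Mf0 wi[OF that]] fM[OF u0] that unfolding g_def by auto
    also have "\<dots> \<le> Mf * s" using that Mf0 by (auto simp: a_def intro!: mult_left_mono)
    finally show ?thesis by (simp add: norm_minus_commute)
  qed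
  define x' where "x' = w a"
  define u' where "u' r = (if r \<in> {a..<t} then u0 else u r)" for r
  define z' where "z' r = (if r < t then w r else z r)" for r
  have key1: "((\<lambda>r. f (z' r) (u' r)) has_integral (x - x')) {a..t}"
    unfolding x'_def
    by (rule has_integral_spike_finite[of "{t}", OF _ _ wa])
       (use at in \<open>auto simp: z'_def u'_def g_def x'_def\<close>)
  have key2: "((\<lambda>r. f (z' r) (u' r)) has_integral (w \<sigma> - x')) {a..\<sigma>}" if "\<sigma> \<in> {a..<t}" for \<sigma>
  proof -
    have ii: "(\<lambda>r. g (w r)) integrable_on {a..\<sigma>}"
      using that by (intro integrable_continuous_interval continuous_on_compose2[OF gc[of UNIV]]
          continuous_on_subset[OF wc]) auto
    have eq: "integral {a..\<sigma>} (\<lambda>r. g (w r)) + integral {\<sigma>..t} (\<lambda>r. g (w r)) = integral {a..t} (\<lambda>r. g (w r))"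
      using Henstock_Kurzweil_Integration.integral_combine[where a=a and c=\<sigma> and b=t and f="\<lambda>r. g (w r)"] that at has_integral_integrable[OF wa] by auto
    have s1: "integral {a..t} (\<lambda>r. g (w r)) = x - w a" by (rule integral_unique[OF wa])
    have s2: "integral {\<sigma>..t} (\<lambda>r. g (w r)) = x - w \<sigma>" 
      by (rule integral_unique[OF wi]) (use that in auto)
    have "integral {a..\<sigma>} (\<lambda>r. g (w r)) = w \<sigma> - x'"
      using eq unfolding s1 s2 x'_def by (simp add: algebra_simps)
    hence hh: "((\<lambda>r. g (w r)) has_integral (w \<sigma> - x')) {a..\<sigma>}" using ii by (metis integrable_integral)
    show ?thesis
      by (rule has_integral_spike_finite[of "{}", OF _ _ hh]) (use that in \<open>auto simp: z'_def u'_def g_def\<close>)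
  qed
  have traj: "is_traj T f a x' u' z'"
    unfolding is_traj_def
  proof
    fix \<sigma> assume \<sigma>: "\<sigma> \<in> {a..T}"
    show "((\<lambda>r. f (z' r) (u' r)) has_integral (z' \<sigma> - x')) {a..\<sigma>}"
    proof (cases "\<sigma> < t")
      case True
      then show ?thesis using key2[of \<sigma>] \<sigma> by (auto simp: z'_def)
    next
      case False
      have hh: "((\<lambda>r. f (z r) (u r)) has_integral (z \<sigma> - x)) {t..\<sigma>}"
        using z \<sigma> False by (auto simp: is_traj_def)
      have "((\<lambda>r. f (z' r) (u' r)) has_integral (z \<sigma> - x)) {t..\<sigma>}"
        by (rule has_integral_spike_finite[of "{}", OF _ _ hh]) (auto simp: z'_def u'_def)
      from has_integral_combine[OF _ _ key1 this] False at
      have "((\<lambda>r. f (z' r) (u' r)) has_integral (x - x' + (z \<sigma> - x))) {a..\<sigma>}" by auto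
      thus ?thesis using False by (auto simp: z'_def)
    qed
  qed
  define c where "c = integral {a..t} (\<lambda>r. L (w r) u0)"
  have ci: "((\<lambda>r. L (w r) u0) has_integral c) {a..t}"
    unfolding c_def
    by (intro integrable_integral integrable_continuous_interval continuous_on_compose2[OF Lc[of UNIV] wc]) auto
  have cost: "((\<lambda>r. L (z' r) (u' r)) has_integral (J + c)) {a..T}"
  proof -
    have 1: "((\<lambda>r. L (z' r) (u' r)) has_integral c) {a..t}"
      by (rule has_integral_spike_finite[of "{t}", OF _ _ ci]) (auto simp: z'_def u'_def)
    have 2: "((\<lambda>r. L (z' r) (u' r)) has_integral J) {t..T}"
      by (rule has_integral_spike_finite[of "{}", OF _ _ zJ]) (auto simp: z'_def u'_def)
    show ?thesis using has_integral_combine[OF _ _ 1 2] at tT by (simp add: add.commute)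
  qed
  have uc: "u' \<in> controls T U"
  proof -
    have "\<forall>s\<in>{0..T}. u' s \<in> U" using u u0 by (auto simp: u'_def controls_def)
    moreover have "bounded (u' ` {0..T})"
    proof -
      have "u' ` {0..T} \<subseteq> insert u0 (u ` {0..T})" by (auto simp: u'_def)
      moreover have "bounded (insert u0 (u ` {0..T}))" using u by (simp add: controls_def bounded_insert)
      ultimately show ?thesis by (rule bounded_subset[rotated])
    qed
    moreover have "u' \<in> borel_measurable (lebesgue_on {0..T})"
      unfolding u'_def
    proof (rule measurable_If_set)
      show "(\<lambda>r. u0) \<in> borel_measurable (lebesgue_on {0..T})" by simp
      show "u \<in> borel_measurable (lebesgue_on {0..T})" using u by (auto simp: controls_def)
      show "{a..<t} \<inter> space (lebesgue_on {0..T}) \<in> sets (lebesgue_on {0..T})"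
      proof -
        have "{a..<t} \<in> sets lebesgue" by simp
        thus ?thesis by (auto simp: sets_restrict_space space_restrict_space intro!: image_eqI[where x="{a..<t}"])
      qed
    qed
    ultimately show ?thesis by (simp add: controls_def)
  qed
  have "J + c \<in> Yset T U f L a x'"
    unfolding Yset_def using uc traj cost by blast
  hence Jc: "J + c \<in> Yset T U f L (t - s) x'" by (simp add: a_def)
  have e1: "norm (x - x' - s *\<^sub>R f x u0) \<le> Kf * Mf * s\<^sup>2"
  proof -
    have hI: "((\<lambda>r. g (w r) - g x) has_integral ((x - x') - s *\<^sub>R g x)) {a..t}"
      using has_integral_diff[OF wa has_integral_const_real[of "g x" a t]] at
      by (auto simp: x'_def a_def)
    have hB: "norm (g (w r) - g x) \<le> Kf * Mf * s" if "r \<in> {a..t}" for r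
      using fK[OF u0, of "w r" x] mult_left_mono[OF wb[OF that] Kf0] unfolding g_def
      by (simp add: mult.assoc)
    have h0: "0 \<le> Kf * Mf * s" using Kf0 Mf0 s by simp
    have "norm ((x - x') - s *\<^sub>R g x) \<le> Kf * Mf * s * (t - a)"
      by (rule hib[OF h0 hI hB]) (use at in auto)
    thus ?thesis by (simp add: g_def a_def power2_eq_square mult.assoc)
  qed
  have e2: "norm (c - s *\<^sub>R L x u0) \<le> KL * Mf * s\<^sup>2"
  proof -
    have hI: "((\<lambda>r. L (w r) u0 - L x u0) has_integral (c - s *\<^sub>R L x u0)) {a..t}"
      using has_integral_diff[OF ci has_integral_const_real[of "L x u0" a t]] at
      by (auto simp: a_def)
    have hB: "norm (L (w r) u0 - L x u0) \<le> KL * Mf * s" if "r \<in> {a..t}" for r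
      using LK[OF u0, of "w r" x] mult_left_mono[OF wb[OF that] KL0]
      by (simp add: mult.assoc)
    have h0: "0 \<le> KL * Mf * s" using KL0 Mf0 s by simp
    have "norm (c - s *\<^sub>R L x u0) \<le> KL * Mf * s * (t - a)"
      by (rule hib[OF h0 hI hB]) (use at in auto)
    thus ?thesis by (simp add: a_def power2_eq_square mult.assoc)
  qed
  have "norm (x' - x) \<le> Mf * s" using wb[of a] at by (auto simp: x'_def)
  thus ?thesis using Jc e1 e2 by blast
qed

end

lemma tri3:
  fixes a b d :: "'a::real_normed_vector"
  shows "0 \<le> s \<Longrightarrow> norm (a + b + s *\<^sub>R d) \<le> norm a + norm b + s * norm d"
  using norm_triangle_ineq[of "a+b" "s *\<^sub>R d"] norm_triangle_ineq[of a b] by simp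

context moc begin

lemma back_iter:
  assumes J: "J \<in> Yset T U f L t x" and tT: "t \<le> T" and fin: "finite S" and SU: "S \<subseteq> U"
    and mu: "\<forall>u\<in>S. 0 \<le> \<mu> u" and h0: "0 \<le> h" and tt: "0 \<le> t - h * sum \<mu> S"
    and sm: "\<forall>u\<in>S. h * \<mu> u * Kf < 1"
  shows "\<exists>x' c. J + c \<in> Yset T U f L (t - h * sum \<mu> S) x'
     \<and> norm (x' - x) \<le> Mf * (h * sum \<mu> S)
     \<and> norm (x - x' - h *\<^sub>R (\<Sum>u\<in>S. \<mu> u *\<^sub>R f x u)) \<le> Kf * Mf * (h * sum \<mu> S)\<^sup>2
     \<and> norm (c - h *\<^sub>R (\<Sum>u\<in>S. \<mu> u *\<^sub>R L x u)) \<le> KL * Mf * (h * sum \<mu> S)\<^sup>2"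
  using fin SU mu tt sm
proof (induction S rule: finite_induct)
  case empty
  then show ?case using J by (intro exI[of _ x] exI[of _ 0]) auto
next
  case (insert v S)
  define \<sigma> where "\<sigma> = h * sum \<mu> S"
  define s where "s = h * \<mu> v"
  have s0: "0 \<le> s" using insert h0 by (auto simp: s_def)
  have \<sigma>0: "0 \<le> \<sigma>" unfolding \<sigma>_def using insert h0 by (intro mult_nonneg_nonneg sum_nonneg) auto
  have tot: "h * sum \<mu> (insert v S) = \<sigma> + s" using insert by (simp add: \<sigma>_def s_def algebra_simps)
  have "0 \<le> t - h * sum \<mu> S" using insert s0 tot by (simp add: \<sigma>_def)
  with insert obtain x1 c1 where
    Y1: "J + c1 \<in> Yset T U f L (t - \<sigma>) x1" and n1: "norm (x1 - x) \<le> Mf * \<sigma>"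
    and e1: "norm (x - x1 - h *\<^sub>R (\<Sum>u\<in>S. \<mu> u *\<^sub>R f x u)) \<le> Kf * Mf * \<sigma>\<^sup>2"
    and c1: "norm (c1 - h *\<^sub>R (\<Sum>u\<in>S. \<mu> u *\<^sub>R L x u)) \<le> KL * Mf * \<sigma>\<^sup>2"
    unfolding \<sigma>_def by auto
  have v: "v \<in> U" using insert by auto
  obtain x2 c2 where Y2: "J + c1 + c2 \<in> Yset T U f L (t - \<sigma> - s) x2"
    and n2: "norm (x2 - x1) \<le> Mf * s"
    and e2: "norm (x1 - x2 - s *\<^sub>R f x1 v) \<le> Kf * Mf * s\<^sup>2"
    and c2: "norm (c2 - s *\<^sub>R L x1 v) \<le> KL * Mf * s\<^sup>2"
    using back_step[OF Y1, of s v] insert tot \<sigma>0 s0 tT v by (auto simp: s_def)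
  have sumf: "h *\<^sub>R (\<Sum>u\<in>insert v S. \<mu> u *\<^sub>R f x u) = s *\<^sub>R f x v + h *\<^sub>R (\<Sum>u\<in>S. \<mu> u *\<^sub>R f x u)"
    using insert by (simp add: s_def scaleR_add_right)
  have sumL: "h *\<^sub>R (\<Sum>u\<in>insert v S. \<mu> u *\<^sub>R L x u) = s *\<^sub>R L x v + h *\<^sub>R (\<Sum>u\<in>S. \<mu> u *\<^sub>R L x u)"
    using insert by (simp add: s_def scaleR_add_right)
  have sq: "\<sigma>\<^sup>2 + s\<^sup>2 + s * \<sigma> \<le> (\<sigma> + s)\<^sup>2" using s0 \<sigma>0 by (simp add: power2_eq_square algebra_simps)
  have KM: "0 \<le> Kf * Mf" "0 \<le> KL * Mf" using Kf0 KL0 Mf0 by auto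
  have ex: "norm (x - x2 - h *\<^sub>R (\<Sum>u\<in>insert v S. \<mu> u *\<^sub>R f x u)) \<le> Kf * Mf * (\<sigma> + s)\<^sup>2"
  proof -
    have "x - x2 - h *\<^sub>R (\<Sum>u\<in>insert v S. \<mu> u *\<^sub>R f x u)
      = (x - x1 - h *\<^sub>R (\<Sum>u\<in>S. \<mu> u *\<^sub>R f x u)) + (x1 - x2 - s *\<^sub>R f x1 v) + s *\<^sub>R (f x1 v - f x v)"
      unfolding sumf by (simp add: algebra_simps)
    hence "norm (x - x2 - h *\<^sub>R (\<Sum>u\<in>insert v S. \<mu> u *\<^sub>R f x u))
        \<le> norm (x - x1 - h *\<^sub>R (\<Sum>u\<in>S. \<mu> u *\<^sub>R f x u)) + norm (x1 - x2 - s *\<^sub>R f x1 v) + s * norm (f x1 v - f x v)"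
      using tri3[OF s0] by metis
    moreover have "s * norm (f x1 v - f x v) \<le> s * (Kf * (Mf * \<sigma>))"
      using fK[OF v, of x1 x] mult_left_mono[OF n1 Kf0] s0 by (intro mult_left_mono) auto
    ultimately have "norm (x - x2 - h *\<^sub>R (\<Sum>u\<in>insert v S. \<mu> u *\<^sub>R f x u))
        \<le> Kf * Mf * (\<sigma>\<^sup>2 + s\<^sup>2 + s * \<sigma>)" using e1 e2 by (simp add: algebra_simps)
    also have "\<dots> \<le> Kf * Mf * (\<sigma> + s)\<^sup>2" by (rule mult_left_mono[OF sq KM(1)])
    finally show ?thesis .
  qed
  have ec: "norm ((c1 + c2) - h *\<^sub>R (\<Sum>u\<in>insert v S. \<mu> u *\<^sub>R L x u)) \<le> KL * Mf * (\<sigma> + s)\<^sup>2"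
  proof -
    have "(c1 + c2) - h *\<^sub>R (\<Sum>u\<in>insert v S. \<mu> u *\<^sub>R L x u)
      = (c1 - h *\<^sub>R (\<Sum>u\<in>S. \<mu> u *\<^sub>R L x u)) + (c2 - s *\<^sub>R L x1 v) + s *\<^sub>R (L x1 v - L x v)"
      unfolding sumL by (simp add: algebra_simps)
    hence "norm ((c1 + c2) - h *\<^sub>R (\<Sum>u\<in>insert v S. \<mu> u *\<^sub>R L x u))
        \<le> norm (c1 - h *\<^sub>R (\<Sum>u\<in>S. \<mu> u *\<^sub>R L x u)) + norm (c2 - s *\<^sub>R L x1 v) + s * norm (L x1 v - L x v)"
      using tri3[OF s0] by metis
    moreover have "s * norm (L x1 v - L x v) \<le> s * (KL * (Mf * \<sigma>))"
      using LK[OF v, of x1 x] mult_left_mono[OF n1 KL0] s0 by (intro mult_left_mono) auto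
    ultimately have "norm ((c1 + c2) - h *\<^sub>R (\<Sum>u\<in>insert v S. \<mu> u *\<^sub>R L x u))
        \<le> KL * Mf * (\<sigma>\<^sup>2 + s\<^sup>2 + s * \<sigma>)" using c1 c2 by (simp add: algebra_simps)
    also have "\<dots> \<le> KL * Mf * (\<sigma> + s)\<^sup>2" by (rule mult_left_mono[OF sq KM(2)])
    finally show ?thesis .
  qed
  have nx: "norm (x2 - x) \<le> Mf * (\<sigma> + s)"
    using norm_triangle_ineq[of "x2 - x1" "x1 - x"] n1 n2 by (simp add: algebra_simps)
  have "J + (c1 + c2) \<in> Yset T U f L (t - h * sum \<mu> (insert v S)) x2"
    using Y2 tot by (simp add: add.assoc diff_diff_eq)
  then show ?case using ex ec nx unfolding tot by blast
qed

end

lemma cone_add: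
  assumes "convex P" "cone P" "p \<in> P" "q \<in> P" shows "p + q \<in> P"
  using assms convex_cone by blast

lemma cone_sum:
  assumes "convex P" "cone P" "0 \<in> P" "finite F" "F \<subseteq> P" "\<forall>v\<in>F. 0 \<le> w v"
  shows "(\<Sum>v\<in>F. w v *\<^sub>R v) \<in> P"
  using assms(4-6)
proof (induction F rule: finite_induct)
  case empty then show ?case using assms by simp
next
  case (insert a F)
  have "w a *\<^sub>R a \<in> P" using insert assms(2) by (simp add: cone_def)
  then show ?case using insert cone_add[OF assms(1,2)] by simp
qed

lemma pos_functional:
  fixes P :: "'p::euclidean_space set"
  assumes cl: "closed P" and cv: "convex P" and cn: "cone P" and P0: "0 \<in> P"
    and pt: "P \<inter> uminus ` P = {0}"
  shows "\<exists>a. \<forall>q\<in>P. q \<noteq> 0 \<longrightarrow> inner a q > 0"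
proof -
  define K where "K = convex hull (P \<inter> sphere 0 1)"
  have cK: "compact K" unfolding K_def
    by (intro compact_convex_hull closed_Int_compact cl compact_sphere)
  have KP: "K \<subseteq> P" unfolding K_def by (rule hull_minimal) (use cv in auto)
  have "0 \<notin> K"
  proof
    assume "0 \<in> K"
    then obtain F w where F: "finite F" "F \<subseteq> P \<inter> sphere 0 1" "\<forall>v\<in>F. 0 \<le> w v" "sum w F = 1"
      "(\<Sum>v\<in>F. w v *\<^sub>R v) = 0"
      unfolding K_def convex_hull_explicit by blast
    obtain v0 where v0: "v0 \<in> F" "w v0 > 0"
    proof (rule ccontr)
      assume "\<not> thesis"
      hence "\<forall>v\<in>F. w v = 0" using that F(3) by force
      thus False using F(4) by simp
    qed
    have split: "(\<Sum>v\<in>F. w v *\<^sub>R v) = w v0 *\<^sub>R v0 + (\<Sum>v\<in>F - {v0}. w v *\<^sub>R v)"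
      using v0 F(1) by (simp add: sum.remove)
    have rest: "(\<Sum>v\<in>F - {v0}. w v *\<^sub>R v) \<in> P"
      by (rule cone_sum[OF cv cn P0]) (use F in auto)
    have "w v0 *\<^sub>R v0 \<in> P" using v0 F cn by (auto simp: cone_def)
    moreover have "w v0 *\<^sub>R v0 = - (\<Sum>v\<in>F - {v0}. w v *\<^sub>R v)" using split F(5)
      by (simp add: eq_neg_iff_add_eq_0)
    ultimately have "w v0 *\<^sub>R v0 \<in> P \<inter> uminus ` P" using rest by auto
    hence "w v0 *\<^sub>R v0 = 0" using pt by auto
    moreover have "norm v0 = 1" using v0 F by auto
    ultimately show False using v0 by auto
  qed
  then obtain a b where ab: "a \<noteq> 0" "0 < b" "\<forall>x\<in>K. inner a x > b"
    using separating_hyperplane_closed_0[of K] cK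
    by (metis compact_imp_closed convex_convex_hull K_def)
  show ?thesis
  proof (intro exI ballI impI)
    fix q assume q: "q \<in> P" "q \<noteq> 0"
    have "(1 / norm q) *\<^sub>R q \<in> P" using q cn by (auto simp: cone_def)
    moreover have "(1 / norm q) *\<^sub>R q \<in> sphere 0 1" using q by auto
    ultimately have "(1 / norm q) *\<^sub>R q \<in> K" unfolding K_def by (auto intro: hull_inc)
    hence "inner a ((1 / norm q) *\<^sub>R q) > 0" using ab by force
    thus "inner a q > 0" using q by (simp add: zero_less_divide_iff)
  qed
qed

lemma dominate:
  fixes P :: "'p::euclidean_space set"
  assumes cl: "closed P" and cv: "convex P" and cn: "cone P" and P0: "0 \<in> P"
    and pt: "P \<inter> uminus ` P = {0}" and S: "compact S" and z: "z \<in> S"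
  shows "\<exists>m\<in>eff S P. \<exists>q\<in>P. z = m + q"
proof -
  obtain a where a: "\<And>q. q \<in> P \<Longrightarrow> q \<noteq> 0 \<Longrightarrow> inner a q > 0"
    using pos_functional[OF cl cv cn P0 pt] by blast
  define S' where "S' = S \<inter> {y. z - y \<in> P}"
  have "closed ((\<lambda>y. z - y) -` P)"
    by (rule continuous_closed_vimage[OF cl]) (intro continuous_intros)
  hence "closed {y. z - y \<in> P}" by (simp add: vimage_def)
  hence cS': "compact S'" unfolding S'_def using S compact_Int_closed by blast
  have "z \<in> S'" using z P0 by (auto simp: S'_def)
  hence ne: "S' \<noteq> {}" by auto
  have "continuous_on S' (\<lambda>y. inner a y)" by (intro continuous_intros)
  then obtain m where m: "m \<in> S'" and mmin: "\<And>y. y \<in> S' \<Longrightarrow> inner a m \<le> inner a y"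
    using continuous_attains_inf[OF cS' ne] by blast
  have "m \<in> eff S P"
    unfolding eff_def
  proof (intro CollectI conjI)
    show mS: "m \<in> S" using m by (auto simp: S'_def)
    show "(\<lambda>q. m - q) ` P \<inter> S = {m}"
    proof
      show "{m} \<subseteq> (\<lambda>q. m - q) ` P \<inter> S" using P0 mS by (auto intro: image_eqI[of _ _ 0])
      show "(\<lambda>q. m - q) ` P \<inter> S \<subseteq> {m}"
      proof
        fix y assume "y \<in> (\<lambda>q. m - q) ` P \<inter> S"
        then obtain q where q: "q \<in> P" "y = m - q" "y \<in> S" by auto
        have "z - m \<in> P" using m by (auto simp: S'_def)
        hence "(z - m) + q \<in> P" using cone_add[OF cv cn] q by blast
        moreover have "z - y = (z - m) + q" using q by simp
        ultimately have "z - y \<in> P" by metis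
        hence "y \<in> S'" using q by (auto simp: S'_def)
        hence "inner a m \<le> inner a y" by (rule mmin)
        hence "inner a m \<le> inner a m - inner a q" using q by (simp add: inner_diff_right)
        hence "q = 0" using a[OF q(1)] by force
        thus "y \<in> {m}" using q by simp
      qed
    qed
  qed
  moreover have "z - m \<in> P" using m by (auto simp: S'_def)
  ultimately show ?thesis by (intro bexI[of _ m] bexI[of _ "z - m"]) auto
qed

lemma avg_near:
  fixes g :: "real \<Rightarrow> 'a::euclidean_space"
  assumes gi: "(g has_integral I) {a..b}" and ab: "a < b" and cK: "closed K" and vK: "convex K"
    and near: "\<And>r. r \<in> {a..b} \<Longrightarrow> \<exists>k\<in>K. norm (g r - k) \<le> e"
  shows "\<exists>k\<in>K. norm ((1 / (b - a)) *\<^sub>R I - k) \<le> e"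
proof -
  obtain k1 where k1: "k1 \<in> K" "norm (g a - k1) \<le> e" using near[of a] ab by auto
  hence e0: "0 \<le> e" using norm_ge_zero order_trans by blast
  have Kne: "K \<noteq> {}" using k1 by auto
  define c where "c = (1 / (b - a)) *\<^sub>R I"
  define k0 where "k0 = closest_point K c"
  have k0K: "k0 \<in> K" unfolding k0_def using closest_point_in_set[OF cK Kne] .
  define \<phi> where "\<phi> = c - k0"
  have dot: "inner \<phi> (k - k0) \<le> 0" if "k \<in> K" for k
    unfolding \<phi>_def k0_def by (rule closest_point_dot[OF vK cK that])
  have pt: "inner \<phi> (g r) \<le> inner \<phi> k0 + norm \<phi> * e" if r: "r \<in> {a..b}" for r
  proof -
    obtain k where k: "k \<in> K" "norm (g r - k) \<le> e" using near[OF r] by blast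
    have "inner \<phi> (g r) = inner \<phi> k0 + inner \<phi> (k - k0) + inner \<phi> (g r - k)"
      by (simp add: inner_diff_right)
    also have "\<dots> \<le> inner \<phi> k0 + 0 + norm \<phi> * norm (g r - k)"
      using dot[OF k(1)] norm_cauchy_schwarz[of \<phi> "g r - k"] by linarith
    also have "\<dots> \<le> inner \<phi> k0 + norm \<phi> * e" using k(2) by (simp add: mult_left_mono)
    finally show ?thesis .
  qed
  have gi2: "((\<lambda>r. inner \<phi> (g r)) has_integral inner \<phi> I) {a..b}"
    using has_integral_linear[OF gi bounded_linear_inner_right[of \<phi>]] by (simp add: o_def)
  have "inner \<phi> I \<le> (b - a) * (inner \<phi> k0 + norm \<phi> * e)"
    using has_integral_le[OF gi2 has_integral_const_real[of "inner \<phi> k0 + norm \<phi> * e" a b] pt] ab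
    by simp
  moreover have "inner \<phi> c = inner \<phi> I / (b - a)" unfolding c_def by (simp add: inner_scaleR_right)
  ultimately have "inner \<phi> c \<le> inner \<phi> k0 + norm \<phi> * e"
    using ab by (simp add: pos_divide_le_eq mult.commute)
  hence "inner \<phi> \<phi> \<le> norm \<phi> * e" unfolding \<phi>_def by (simp add: inner_diff_right algebra_simps)
  hence "norm \<phi> * norm \<phi> \<le> norm \<phi> * e" by (simp add: power2_eq_square[symmetric] power2_norm_eq_inner[symmetric])
  hence nn: "norm \<phi> * norm \<phi> \<le> norm \<phi> * e" .
  have "norm \<phi> \<le> e"
  proof (rule ccontr)
    assume "\<not> norm \<phi> \<le> e"
    hence "e < norm \<phi>" by simp
    moreover have "0 < norm \<phi>" using e0 \<open>e < norm \<phi>\<close> by linarith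
    ultimately have "norm \<phi> * e < norm \<phi> * norm \<phi>" by (rule mult_strict_left_mono)
    thus False using nn by linarith
  qed
  thus ?thesis using k0K unfolding \<phi>_def c_def by blast
qed

lemma cc_closed:
  fixes S :: "'a::real_normed_vector set"
  shows "closed (contingent_cone S z)"
proof (rule closed_sequential_limits[THEN iffD2], intro allI impI, elim conjE)
  fix xs l assume xs: "\<forall>n. xs n \<in> contingent_cone S z" and lim: "xs \<longlonglongrightarrow> l"
  have ex: "\<exists>H V. H > 0 \<and> H < inverse (real (Suc n)) \<and> norm (V - xs n) < inverse (real (Suc n))
              \<and> z + H *\<^sub>R V \<in> S" for n
  proof -
    have "xs n \<in> contingent_cone S z" using xs by blast
    hence "\<exists>h vs. (\<forall>k. h k > 0) \<and> h \<longlonglongrightarrow> 0 \<and> vs \<longlonglongrightarrow> xs n \<and> (\<forall>k. z + h k *\<^sub>R vs k \<in> S)"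
      unfolding contingent_cone_def by simp
    then obtain h vs where h: "\<forall>k. h k > 0" "h \<longlonglongrightarrow> 0" "vs \<longlonglongrightarrow> xs n" "\<forall>k. z + h k *\<^sub>R vs k \<in> S"
      by blast
    have e: "inverse (real (Suc n)) > 0" by simp
    have "eventually (\<lambda>k. dist (h k) 0 < inverse (real (Suc n))) sequentially"
      using h(2) e by (rule tendstoD)
    moreover have "eventually (\<lambda>k. dist (vs k) (xs n) < inverse (real (Suc n))) sequentially"
      using h(3) e by (rule tendstoD)
    ultimately have "eventually (\<lambda>k. dist (h k) 0 < inverse (real (Suc n)) \<and> dist (vs k) (xs n) < inverse (real (Suc n))) sequentially"
      by (rule eventually_conj)
    then obtain N where "\<forall>k\<ge>N. dist (h k) 0 < inverse (real (Suc n)) \<and> dist (vs k) (xs n) < inverse (real (Suc n))"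
      unfolding eventually_sequentially by blast
    then obtain k where "dist (h k) 0 < inverse (real (Suc n))" "dist (vs k) (xs n) < inverse (real (Suc n))"
      by blast
    thus ?thesis using h(1,4) by (intro exI[of _ "h k"] exI[of _ "vs k"]) (auto simp: dist_norm)
  qed
  define Q where "Q n H V \<longleftrightarrow> H > 0 \<and> H < inverse (real (Suc n)) \<and> norm (V - xs n) < inverse (real (Suc n))
              \<and> z + H *\<^sub>R V \<in> S" for n H V
  have "\<forall>n. \<exists>p. Q n (fst p) (snd p)" using ex unfolding Q_def by fastforce
  then obtain p where p: "\<And>n. Q n (fst (p n)) (snd (p n))" using choice by metis
  define H where "H n = fst (p n)" for n
  define V where "V n = snd (p n)" for n
  have HV: "\<And>n. H n > 0" "\<And>n. H n < inverse (real (Suc n))"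
    "\<And>n. norm (V n - xs n) < inverse (real (Suc n))" "\<And>n. z + H n *\<^sub>R V n \<in> S"
    using p unfolding Q_def H_def V_def by auto
  have inv0: "(\<lambda>n. inverse (real (Suc n))) \<longlonglongrightarrow> 0" using LIMSEQ_inverse_real_of_nat .
  have H0: "H \<longlonglongrightarrow> 0"
  proof (rule tendsto_sandwich[OF _ _ tendsto_const inv0])
    show "\<forall>\<^sub>F n in sequentially. 0 \<le> H n" using HV(1) by (simp add: less_imp_le)
    show "\<forall>\<^sub>F n in sequentially. H n \<le> inverse (real (Suc n))" using HV(2) by (simp add: less_imp_le)
  qed
  have "(\<lambda>n. V n - xs n) \<longlonglongrightarrow> 0"
  proof (rule tendsto_norm_zero_cancel, rule tendsto_sandwich[OF _ _ tendsto_const inv0])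
    show "\<forall>\<^sub>F n in sequentially. 0 \<le> norm (V n - xs n)" by simp
    show "\<forall>\<^sub>F n in sequentially. norm (V n - xs n) \<le> inverse (real (Suc n))" using HV(3) by (simp add: less_imp_le)
  qed
  hence "(\<lambda>n. (V n - xs n) + xs n) \<longlonglongrightarrow> 0 + l" using lim by (rule tendsto_add)
  hence "V \<longlonglongrightarrow> l" by simp
  thus "l \<in> contingent_cone S z" unfolding contingent_cone_def mem_Collect_eq
    by (intro exI[of _ H] exI[of _ V] conjI allI) (use HV H0 in auto)
qed

lemma has_integral_Pair:
  fixes F :: "real \<Rightarrow> 'a::real_normed_vector" and G :: "real \<Rightarrow> 'b::real_normed_vector"
  assumes "(F has_integral I1) S" "(G has_integral I2) S"
  shows "((\<lambda>r. (F r, G r)) has_integral (I1, I2)) S"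
proof -
  have a: "((\<lambda>r. (F r, 0::'b)) has_integral (I1, 0)) S"
    using has_integral_linear[OF assms(1) bounded_linear_Pair[OF bounded_linear_ident bounded_linear_zero]]
    by (simp add: o_def)
  have b: "((\<lambda>r. (0::'a, G r)) has_integral (0, I2)) S"
    using has_integral_linear[OF assms(2) bounded_linear_Pair[OF bounded_linear_zero bounded_linear_ident]]
    by (simp add: o_def)
  show ?thesis using has_integral_add[OF a b] by simp
qed

lemma tendsto_by_bound:
  fixes X :: "nat \<Rightarrow> 'a::real_normed_vector"
  assumes "\<And>k. norm (X k - l) \<le> C * h k" "h \<longlonglongrightarrow> 0"
  shows "X \<longlonglongrightarrow> l"
proof -
  have "(\<lambda>k. X k - l) \<longlonglongrightarrow> 0"
    by (rule Lim_null_comparison[of _ "\<lambda>k. C * h k"])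
       (use assms tendsto_mult_right_zero[OF assms(2), of C] in auto)
  thus ?thesis using Lim_null by (simp add: LIM_zero_iff)
qed

locale moc_P = moc T U f L Kf Mf KL BL
  for T :: real and U :: "'m::euclidean_space set"
    and f :: "'n::euclidean_space \<Rightarrow> 'm \<Rightarrow> 'n"
    and L :: "'n \<Rightarrow> 'm \<Rightarrow> 'p::euclidean_space"
    and Kf Mf KL BL :: real +
  fixes P :: "'p set"
  assumes Pcl: "closed P" and Pcv: "convex P" and Pcn: "cone P" and P0: "0 \<in> P"
    and Ppt: "P \<inter> uminus ` P = {0}"
begin

abbreviation "V \<equiv> Vmap T U f L P"
abbreviation "Y \<equiv> Yset T U f L"

lemma Y_bound:
  assumes "0 \<le> t" "t \<le> T" "J \<in> Y t x" shows "norm J \<le> BL * (T - t)"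
proof -
  from assms obtain u z where u: "u \<in> controls T U" and zJ: "((\<lambda>r. L (z r) (u r)) has_integral J) {t..T}"
    unfolding Yset_def by blast
  show ?thesis
  proof (rule hib[OF BL0 zJ])
    fix r assume "r \<in> {t..T}"
    hence "u r \<in> U" using assms ctrl_in[OF u, of r] by auto
    thus "norm (L (z r) (u r)) \<le> BL" by (rule LB)
  qed (use assms in auto)
qed

lemma Y_compact:
  assumes "0 \<le> t" "t \<le> T" shows "compact (closure (Y t x))"
proof -
  have "bounded (Y t x)" unfolding bounded_iff using Y_bound[OF assms] by blast
  thus ?thesis by simp
qed

lemma closure_in_upper:
  assumes "0 \<le> t" "t \<le> T" "z \<in> closure (Y t x)"
  shows "z \<in> upper V P t x"
proof -
  obtain m q where "m \<in> V t x" "q \<in> P" "z = m + q"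
    using dominate[OF Pcl Pcv Pcn P0 Ppt Y_compact[OF assms(1,2)] assms(3)]
    unfolding Vmap_def by blast
  thus ?thesis unfolding upper_def by blast
qed

lemma in_graph:
  assumes "0 \<le> t" "t \<le> T" "z \<in> Y t x"
  shows "((t, x), z) \<in> graph_on T (upper V P)"
  using closure_in_upper[OF assms(1,2) closure_subset[THEN subsetD, OF assms(3)]] assms
  unfolding graph_on_def by auto

lemma tail:
  assumes u: "u \<in> controls T U" and z: "is_traj T f t x u z"
    and zJ: "((\<lambda>r. L (z r) (u r)) has_integral J) {t..T}" and ts: "t \<le> s" "s \<le> T"
  shows "\<exists>Ih. ((\<lambda>r. L (z r) (u r)) has_integral Ih) {t..s} \<and> J - Ih \<in> Y s (z s)"
proof -
  define Ih where "Ih = integral {t..s} (\<lambda>r. L (z r) (u r))"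
  have hI: "((\<lambda>r. L (z r) (u r)) has_integral Ih) {t..s}"
    unfolding Ih_def using ts by (intro integrable_integral integrable_subinterval_real[OF has_integral_integrable[OF zJ]]) auto
  have i2: "(\<lambda>r. L (z r) (u r)) integrable_on {s..T}"
    using ts by (intro integrable_subinterval_real[OF has_integral_integrable[OF zJ]]) auto
  have "Ih + integral {s..T} (\<lambda>r. L (z r) (u r)) = J"
    using has_integral_unique[OF has_integral_combine[OF ts hI integrable_integral[OF i2]] zJ] .
  hence cost: "((\<lambda>r. L (z r) (u r)) has_integral (J - Ih)) {s..T}"
    using integrable_integral[OF i2] by (metis add_diff_cancel_left')
  have traj: "is_traj T f s (z s) u z"
    unfolding is_traj_def
  proof
    fix \<sigma> assume \<sigma>: "\<sigma> \<in> {s..T}"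
    have A: "((\<lambda>r. f (z r) (u r)) has_integral (z \<sigma> - x)) {t..\<sigma>}" using z \<sigma> ts by (auto simp: is_traj_def)
    have B: "((\<lambda>r. f (z r) (u r)) has_integral (z s - x)) {t..s}" using z ts by (auto simp: is_traj_def)
    have i3: "(\<lambda>r. f (z r) (u r)) integrable_on {s..\<sigma>}"
      using \<sigma> ts by (intro integrable_subinterval_real[OF has_integral_integrable[OF A]]) auto
    have "z s - x + integral {s..\<sigma>} (\<lambda>r. f (z r) (u r)) = z \<sigma> - x"
      using has_integral_unique[OF has_integral_combine[OF _ _ B integrable_integral[OF i3]] A] ts \<sigma> by auto
    hence "integral {s..\<sigma>} (\<lambda>r. f (z r) (u r)) = z \<sigma> - z s" by (simp add: algebra_simps)
    thus "((\<lambda>r. f (z r) (u r)) has_integral (z \<sigma> - z s)) {s..\<sigma>}"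
      using integrable_integral[OF i3] by metis
  qed
  have "J - Ih \<in> Y s (z s)" unfolding Yset_def using u traj cost by blast
  thus ?thesis using hI by blast
qed

end

context moc_P begin

lemma part2_core:
  assumes t: "0 < t" "t \<le> T" and y: "y \<in> closure (Y t x)"
    and fin: "finite S" and SU: "S \<subseteq> U" and mu: "\<forall>u\<in>S. 0 \<le> \<mu> u" and s1: "sum \<mu> S = 1"
  shows "((-1, - (\<Sum>u\<in>S. \<mu> u *\<^sub>R f x u)), (\<Sum>u\<in>S. \<mu> u *\<^sub>R L x u))
          \<in> contingent_cone (graph_on T (upper V P)) ((t, x), y)"
proof -
  define cf where "cf = (\<Sum>u\<in>S. \<mu> u *\<^sub>R f x u)"
  define cL where "cL = (\<Sum>u\<in>S. \<mu> u *\<^sub>R L x u)"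
  define \<delta> where "\<delta> = min t (1 / (Kf + 1))"
  have \<delta>0: "0 < \<delta>" using t Kf0 by (simp add: \<delta>_def)
  define h where "h k = \<delta> * inverse (real (Suc k))" for k
  have h0: "h k > 0" for k using \<delta>0 by (simp add: h_def)
  have hle: "h k \<le> \<delta>" for k using \<delta>0 by (simp add: h_def mult_left_le field_simps)
  have hlim: "h \<longlonglongrightarrow> 0" unfolding h_def
    using tendsto_mult_right_zero[OF LIMSEQ_inverse_real_of_nat, of \<delta>] by simp
  have mu1: "\<mu> u \<le> 1" if "u \<in> S" for u
    using member_le_sum[of u S \<mu>] that mu fin s1 by auto
  have smallK: "h k * \<mu> u * Kf < 1" if "u \<in> S" for k u
  proof -
    have "\<mu> u * Kf \<le> Kf" using mult_right_mono[OF mu1[OF that] Kf0] by simp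
    hence "h k * \<mu> u * Kf \<le> h k * Kf" using h0[of k]
      by (simp add: mult.assoc mult_left_mono)
    also have "\<dots> \<le> (1 / (Kf + 1)) * Kf" using hle[of k] Kf0 by (intro mult_right_mono) (auto simp: \<delta>_def)
    also have "\<dots> < 1" using Kf0 by (simp add: field_simps)
    finally show ?thesis .
  qed
  have approx: "\<exists>J\<in>Y t x. norm (J - y) < (h k)\<^sup>2" for k
    using closure_approachable[THEN iffD1, OF y, rule_format, of "(h k)\<^sup>2"] h0[of k] by (auto simp: dist_norm)
  define Q where "Q k p \<longleftrightarrow> (snd p) \<in> Y (t - h k) (fst p)
      \<and> norm (fst p - x) \<le> Mf * h k
      \<and> norm (x - fst p - h k *\<^sub>R cf) \<le> Kf * Mf * (h k)\<^sup>2
      \<and> norm (snd p - y - h k *\<^sub>R cL) \<le> (1 + KL * Mf) * (h k)\<^sup>2" for k p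
  have "\<exists>p. Q k p" for k
  proof -
    obtain J where J: "J \<in> Y t x" "norm (J - y) < (h k)\<^sup>2" using approx by blast
    have "0 \<le> t - h k * sum \<mu> S" using hle[of k] s1 by (simp add: \<delta>_def)
    then obtain x' c where xc: "J + c \<in> Y (t - h k * sum \<mu> S) x'"
      "norm (x - x' - h k *\<^sub>R cf) \<le> Kf * Mf * (h k * sum \<mu> S)\<^sup>2"
      "norm (x' - x) \<le> Mf * (h k * sum \<mu> S)"
      "norm (c - h k *\<^sub>R cL) \<le> KL * Mf * (h k * sum \<mu> S)\<^sup>2"
      using back_iter[OF J(1) t(2) fin SU mu less_imp_le[OF h0[of k]]] smallK
      unfolding cf_def cL_def by blast
    have "norm (J + c - y - h k *\<^sub>R cL) \<le> norm (J - y) + norm (c - h k *\<^sub>R cL)"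
      using norm_triangle_ineq[of "J - y" "c - h k *\<^sub>R cL"] by (simp add: algebra_simps)
    also have "\<dots> \<le> (1 + KL * Mf) * (h k)\<^sup>2" using J(2) xc(4) s1 by (simp add: algebra_simps)
    finally have "norm (J + c - y - h k *\<^sub>R cL) \<le> (1 + KL * Mf) * (h k)\<^sup>2" .
    thus ?thesis using xc s1 unfolding Q_def by (intro exI[of _ "(x', J + c)"]) auto
  qed
  then obtain p where p: "\<And>k. Q k (p k)" using choice by metis
  define xs where "xs k = fst (p k)" for k
  define Js where "Js k = snd (p k)" for k
  have P1: "Js k \<in> Y (t - h k) (xs k)"
    and P2: "norm (x - xs k - h k *\<^sub>R cf) \<le> Kf * Mf * (h k)\<^sup>2"
    and P3: "norm (Js k - y - h k *\<^sub>R cL) \<le> (1 + KL * Mf) * (h k)\<^sup>2" for k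
    using p[of k] unfolding Q_def xs_def Js_def by auto
  define vs where "vs k = ((-1::real, (1 / h k) *\<^sub>R (xs k - x)), (1 / h k) *\<^sub>R (Js k - y))" for k
  have mem: "((t, x), y) + h k *\<^sub>R vs k \<in> graph_on T (upper V P)" for k
  proof -
    have "((t, x), y) + h k *\<^sub>R vs k = ((t - h k, xs k), Js k)"
      using h0[of k] by (simp add: vs_def algebra_simps)
    moreover have "0 \<le> t - h k" "t - h k \<le> T" using hle[of k] h0[of k] t by (auto simp: \<delta>_def)
    ultimately show ?thesis using in_graph P1 by metis
  qed
  have c1: "(\<lambda>k. (1 / h k) *\<^sub>R (xs k - x)) \<longlonglongrightarrow> - cf"
  proof (rule tendsto_by_bound[OF _ hlim])
    fix k
    have "(1 / h k) *\<^sub>R (xs k - x) - - cf = - ((1 / h k) *\<^sub>R (x - xs k - h k *\<^sub>R cf))"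
      using h0[of k] by (simp add: algebra_simps)
    hence "norm ((1 / h k) *\<^sub>R (xs k - x) - - cf) = (1 / h k) * norm (x - xs k - h k *\<^sub>R cf)"
      using h0[of k] by simp
    also have "\<dots> \<le> (1 / h k) * (Kf * Mf * (h k)\<^sup>2)"
      using P2[of k] h0[of k] by (intro mult_left_mono) auto
    also have "\<dots> = (Kf * Mf) * h k" using h0[of k] by (simp add: power2_eq_square)
    finally show "norm ((1 / h k) *\<^sub>R (xs k - x) - - cf) \<le> (Kf * Mf) * h k" .
  qed
  have c2: "(\<lambda>k. (1 / h k) *\<^sub>R (Js k - y)) \<longlonglongrightarrow> cL"
  proof (rule tendsto_by_bound[OF _ hlim])
    fix k
    have "(1 / h k) *\<^sub>R (Js k - y) - cL = (1 / h k) *\<^sub>R (Js k - y - h k *\<^sub>R cL)"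
      using h0[of k] by (simp add: algebra_simps)
    hence "norm ((1 / h k) *\<^sub>R (Js k - y) - cL) = (1 / h k) * norm (Js k - y - h k *\<^sub>R cL)"
      using h0[of k] by simp
    also have "\<dots> \<le> (1 / h k) * ((1 + KL * Mf) * (h k)\<^sup>2)"
      using P3[of k] h0[of k] by (intro mult_left_mono) auto
    also have "\<dots> = (1 + KL * Mf) * h k" using h0[of k] by (simp add: power2_eq_square)
    finally show "norm ((1 / h k) *\<^sub>R (Js k - y) - cL) \<le> (1 + KL * Mf) * h k" .
  qed
  have "vs \<longlonglongrightarrow> ((-1, - cf), cL)" unfolding vs_def
    by (intro tendsto_Pair tendsto_const c1 c2)
  thus ?thesis unfolding contingent_cone_def cf_def[symmetric] cL_def[symmetric] mem_Collect_eq
    using h0 hlim mem by blast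
qed

end

context moc_P begin

lemma FL_closed: "closed (FL U f L x)" unfolding FL_def by simp
lemma FL_convex: "convex (FL U f L x)" unfolding FL_def by (simp add: convex_closure)
lemma FL_mem: "u \<in> U \<Longrightarrow> (f x u, L x u) \<in> FL U f L x"
  unfolding FL_def by (rule closure_subset[THEN subsetD], rule hull_inc) blast

lemma part1_core:
  assumes t: "0 \<le> t" "t < T" and y: "y \<in> closure (Y t x)"
  shows "\<exists>(fb, Lb)\<in>FL U f L x. - Lb \<in> cont_deriv T (upper V P) (t, x) y (1, fb)"
proof -
  define C where "C = (Kf + KL) * Mf"
  define h where "h k = (T - t) * inverse (real (Suc k))" for k
  have h0: "h k > 0" for k using t by (simp add: h_def)
  have hle: "h k \<le> T - t" for k unfolding h_def by (rule mult_left_le) (use t in \<open>auto simp: inverse_le_1_iff\<close>)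
  have hlim: "h \<longlonglongrightarrow> 0" unfolding h_def
    using tendsto_mult_right_zero[OF LIMSEQ_inverse_real_of_nat, of "T - t"] by simp
  have approx: "\<exists>J\<in>Y t x. norm (J - y) < (h k)\<^sup>2" for k
    using closure_approachable[THEN iffD1, OF y, rule_format, of "(h k)\<^sup>2"] h0[of k] by (auto simp: dist_norm)
  define Q where "Q k p \<longleftrightarrow> snd (snd (fst p)) \<in> Y (t + h k) (fst (fst p))
      \<and> norm (fst (fst p) - x) \<le> Mf * h k
      \<and> norm (fst (snd (fst p))) \<le> BL * h k
      \<and> snd p \<in> FL U f L x
      \<and> norm ((1 / h k) *\<^sub>R (fst (fst p) - x, fst (snd (fst p))) - snd p) \<le> C * h k
      \<and> norm (snd (snd (fst p)) + fst (snd (fst p)) - y) < (h k)\<^sup>2" for k p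
  have "\<exists>p. Q k p" for k
  proof -
    obtain J where J: "J \<in> Y t x" "norm (J - y) < (h k)\<^sup>2" using approx by blast
    then obtain u z where u: "u \<in> controls T U" and z: "is_traj T f t x u z"
      and zJ: "((\<lambda>r. L (z r) (u r)) has_integral J) {t..T}"
      unfolding Yset_def by blast
    have ts: "t \<le> t + h k" "t + h k \<le> T" using h0[of k] hle[of k] by auto
    obtain Ih where Ih: "((\<lambda>r. L (z r) (u r)) has_integral Ih) {t..t + h k}"
      "J - Ih \<in> Y (t + h k) (z (t + h k))"
      using tail[OF u z zJ ts] by blast
    have zI: "((\<lambda>r. f (z r) (u r)) has_integral (z (t + h k) - x)) {t..t + h k}"
      using z ts by (auto simp: is_traj_def)
    have uU: "u r \<in> U" if "r \<in> {t..t + h k}" for r using ctrl_in[OF u, of r] that ts t by auto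
    have zb: "norm (z r - x) \<le> Mf * h k" if "r \<in> {t..t + h k}" for r
    proof -
      have "norm (z r - x) \<le> Mf * (r - t)" using traj_bound[OF z u t(1), of r] that ts by auto
      also have "\<dots> \<le> Mf * h k" using that Mf0 by (intro mult_left_mono) auto
      finally show ?thesis .
    qed
    have n1: "norm (z (t + h k) - x) \<le> Mf * h k" using zb[of "t + h k"] ts by auto
    have n2: "norm Ih \<le> BL * h k"
      using hib[OF BL0 Ih(1)] LB uU ts by fastforce
    have gI: "((\<lambda>r. (f (z r) (u r), L (z r) (u r))) has_integral (z (t + h k) - x, Ih)) {t..t + h k}"
      by (rule has_integral_Pair[OF zI Ih(1)])
    have near: "\<exists>\<kappa>\<in>FL U f L x. norm ((f (z r) (u r), L (z r) (u r)) - \<kappa>) \<le> C * h k"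
      if r: "r \<in> {t..t + h k}" for r
    proof (intro bexI)
      show "(f x (u r), L x (u r)) \<in> FL U f L x" by (rule FL_mem[OF uU[OF r]])
      have "norm ((f (z r) (u r), L (z r) (u r)) - (f x (u r), L x (u r)))
          \<le> norm (f (z r) (u r) - f x (u r)) + norm (L (z r) (u r) - L x (u r))"
        using norm_Pair_le by simp
      also have "\<dots> \<le> Kf * norm (z r - x) + KL * norm (z r - x)"
        using fK[OF uU[OF r]] LK[OF uU[OF r]] by (intro add_mono) auto
      also have "\<dots> \<le> Kf * (Mf * h k) + KL * (Mf * h k)"
        using zb[OF r] Kf0 KL0 by (intro add_mono mult_left_mono) auto
      also have "\<dots> = C * h k" by (simp add: C_def algebra_simps)
      finally show "norm ((f (z r) (u r), L (z r) (u r)) - (f x (u r), L x (u r))) \<le> C * h k" .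
    qed
    obtain \<kappa> where \<kappa>: "\<kappa> \<in> FL U f L x"
      "norm ((1 / (t + h k - t)) *\<^sub>R (z (t + h k) - x, Ih) - \<kappa>) \<le> C * h k"
      using avg_near[OF gI _ FL_closed FL_convex near] h0[of k] by auto
    have "Q k ((z (t + h k), (Ih, J - Ih)), \<kappa>)"
      unfolding Q_def using Ih(2) n1 n2 \<kappa> J(2) by auto
    thus ?thesis by blast
  qed
  then obtain p where p: "\<And>k. Q k (p k)" using choice by metis
  define X where "X k = fst (fst (p k))" for k
  define Ih where "Ih k = fst (snd (fst (p k)))" for k
  define W where "W k = snd (snd (fst (p k)))" for k
  define \<kappa> where "\<kappa> k = snd (p k)" for k
  have Q1: "W k \<in> Y (t + h k) (X k)" and Q2: "norm (X k - x) \<le> Mf * h k"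
    and Q3: "norm (Ih k) \<le> BL * h k" and Q4: "\<kappa> k \<in> FL U f L x"
    and Q5: "norm ((1 / h k) *\<^sub>R (X k - x, Ih k) - \<kappa> k) \<le> C * h k"
    and Q6: "norm (W k + Ih k - y) < (h k)\<^sup>2" for k
    using p[of k] unfolding Q_def X_def Ih_def W_def \<kappa>_def by auto
  define A where "A k = (1 / h k) *\<^sub>R (X k - x, Ih k)" for k
  have Abd: "norm (A k) \<le> Mf + BL" for k
  proof -
    have "norm (A k) = (1 / h k) * norm (X k - x, Ih k)" unfolding A_def norm_scaleR using h0[of k] by simp
    also have "\<dots> \<le> (1 / h k) * (Mf * h k + BL * h k)"
      using norm_Pair_le[of "X k - x" "Ih k"] Q2[of k] Q3[of k] h0[of k]
      by (intro mult_left_mono) auto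
    also have "\<dots> = Mf + BL" using h0[of k] by (simp add: field_simps)
    finally show ?thesis .
  qed
  have "bounded (range A)" unfolding bounded_iff using Abd by blast
  then obtain l r where r: "strict_mono r" and Al: "(A \<circ> r) \<longlonglongrightarrow> l"
    using bounded_imp_convergent_subsequence by blast
  have "(\<lambda>k. A k - \<kappa> k) \<longlonglongrightarrow> 0"
    by (rule tendsto_by_bound[where C=C and h=h]) (use Q5 hlim in \<open>simp_all add: A_def\<close>)
  hence "(\<lambda>k. A (r k) - \<kappa> (r k)) \<longlonglongrightarrow> 0" using LIMSEQ_subseq_LIMSEQ[OF _ r] by (simp add: o_def)
  hence "(\<lambda>k. A (r k) - (A (r k) - \<kappa> (r k))) \<longlonglongrightarrow> l - 0" using Al by (intro tendsto_diff) (auto simp: o_def)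
  hence "(\<kappa> \<circ> r) \<longlonglongrightarrow> l" by (simp add: o_def)
  hence lFL: "l \<in> FL U f L x" using closed_sequentially[OF FL_closed] Q4 by (metis comp_apply)
  obtain fb Lb where l: "l = (fb, Lb)" by (cases l)
  define E where "E k = (1 / h k) *\<^sub>R (W k + Ih k - y)" for k
  have E0: "E \<longlonglongrightarrow> 0"
  proof (rule tendsto_by_bound[where C=1 and h=h, OF _ hlim])
    fix k
    have "norm (E k - 0) = (1 / h k) * norm (W k + Ih k - y)" using h0[of k] by (simp add: E_def)
    also have "\<dots> \<le> (1 / h k) * (h k)\<^sup>2" using Q6[of k] h0[of k] by (intro mult_left_mono) auto
    also have "\<dots> = 1 * h k" using h0[of k] by (simp add: power2_eq_square)
    finally show "norm (E k - 0) \<le> 1 * h k" .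
  qed
  define vs where "vs k = ((1::real, fst (A k)), E k - snd (A k))" for k
  have mem: "((t, x), y) + h k *\<^sub>R vs k \<in> graph_on T (upper V P)" for k
  proof -
    have "((t, x), y) + h k *\<^sub>R vs k = ((t + h k, X k), W k)"
      using h0[of k] by (simp add: vs_def A_def E_def algebra_simps)
    moreover have "0 \<le> t + h k" "t + h k \<le> T" using hle[of k] h0[of k] t by auto
    ultimately show ?thesis using in_graph Q1 by metis
  qed
  have "(vs \<circ> r) \<longlonglongrightarrow> ((1, fb), 0 - Lb)"
  proof -
    have a1: "(\<lambda>k. fst (A (r k))) \<longlonglongrightarrow> fb" using tendsto_fst[OF Al] l by (simp add: o_def)
    have a2: "(\<lambda>k. snd (A (r k))) \<longlonglongrightarrow> Lb" using tendsto_snd[OF Al] l by (simp add: o_def)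
    have a3: "(\<lambda>k. E (r k)) \<longlonglongrightarrow> 0" using LIMSEQ_subseq_LIMSEQ[OF E0 r] by (simp add: o_def)
    show ?thesis unfolding vs_def o_def by (intro tendsto_Pair tendsto_const tendsto_diff a1 a2 a3)
  qed
  hence "((1, fb), - Lb) \<in> contingent_cone (graph_on T (upper V P)) ((t, x), y)"
    unfolding contingent_cone_def mem_Collect_eq
    by (intro exI[of _ "h \<circ> r"] exI[of _ "vs \<circ> r"] conjI allI)
       (use h0 mem LIMSEQ_subseq_LIMSEQ[OF hlim r] in \<open>auto simp: o_def\<close>)
  hence "- Lb \<in> cont_deriv T (upper V P) (t, x) y (1, fb)" unfolding cont_deriv_def by simp
  thus ?thesis using lFL l by blast
qed

end

context moc_P begin

lemma Y_T: "Y T x = {0}"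
proof
  show "Y T x \<subseteq> {0}"
  proof
    fix J assume "J \<in> Y T x"
    then obtain u z where "((\<lambda>r. L (z r) (u r)) has_integral J) {T..T}" unfolding Yset_def by blast
    hence "J = 0" by (rule int_point0)
    thus "J \<in> {0}" by simp
  qed
  obtain u0 where u0: "u0 \<in> U" by (rule some_u)
  have uc: "(\<lambda>_. u0) \<in> controls T U"
    using u0 by (auto simp: controls_def image_constant_conv)
  have tr: "is_traj T f T x (\<lambda>_. u0) (\<lambda>_. x)"
    unfolding is_traj_def by auto
  have "((\<lambda>r. L x u0) has_integral 0) {T..T}" by auto
  thus "{0} \<subseteq> Y T x" unfolding Yset_def using uc tr by blast
qed

lemma V_T: "V T x = {0}"
  unfolding Vmap_def Y_T eff_def using P0 by (auto intro: image_eqI[of _ _ 0])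

lemma V_sub: "V t x \<subseteq> closure (Y t x)" unfolding Vmap_def eff_def by auto

lemma extremal: "extremal_element_map T V P"
  unfolding extremal_element_map_def
proof (intro ballI allI conjI)
  fix t x y assume y: "y \<in> V t x"
  have e: "(\<lambda>q. y - q) ` P \<inter> closure (Y t x) = {y}" using y unfolding Vmap_def eff_def by auto
  show "V t x \<inter> (\<lambda>q. y - q) ` P = {y}"
    using e V_sub[of t x] y P0 by (auto intro: image_eqI[of _ _ 0])
  show "V t x \<inter> (\<lambda>q. y + q) ` P = {y}"
  proof
    show "{y} \<subseteq> V t x \<inter> (\<lambda>q. y + q) ` P" using y P0 by (auto intro: image_eqI[of _ _ 0])
    show "V t x \<inter> (\<lambda>q. y + q) ` P \<subseteq> {y}"
    proof
      fix y' assume "y' \<in> V t x \<inter> (\<lambda>q. y + q) ` P"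
      then obtain q where q: "q \<in> P" "y' = y + q" "y' \<in> V t x" by auto
      have e': "(\<lambda>q. y' - q) ` P \<inter> closure (Y t x) = {y'}" using q(3) unfolding Vmap_def eff_def by auto
      have "y \<in> (\<lambda>q. y' - q) ` P \<inter> closure (Y t x)"
        using q V_sub[of t x] y by (auto intro: image_eqI[of _ _ q])
      hence "y = y'" using e' by auto
      thus "y' \<in> {y}" by simp
    qed
  qed
qed

lemma part2:
  assumes t: "0 < t" "t \<le> T" and y: "y \<in> V t x" and fl: "(fb, Lb) \<in> FL U f L x"
  shows "Lb \<in> cont_deriv T (upper V P) (t, x) y (-1, - fb)"
proof -
  let ?CC = "contingent_cone (graph_on T (upper V P)) ((t, x), y)"
  define G where "G = (\<lambda>pr. ((-1::real, - fst pr), snd pr)) -` ?CC"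
  have clG: "closed G" unfolding G_def
    by (rule continuous_closed_vimage[OF cc_closed]) (intro continuous_intros)
  have yc: "y \<in> closure (Y t x)" using y V_sub by blast
  define a where "a u = (f x u, L x u)" for u
  have Aeq: "{(f x u, L x u) | u. u \<in> U} = a ` U" by (auto simp: a_def)
  have "convex hull (a ` U) \<subseteq> G"
  proof
    fix c assume "c \<in> convex hull (a ` U)"
    then obtain F w where F: "finite F" "F \<subseteq> a ` U" "\<forall>v\<in>F. 0 \<le> w v" "sum w F = 1"
      "(\<Sum>v\<in>F. w v *\<^sub>R v) = c"
      unfolding convex_hull_explicit by blast
    define sel where "sel v = (SOME u. u \<in> U \<and> a u = v)" for v
    have sel: "sel v \<in> U \<and> a (sel v) = v" if "v \<in> F" for v
      unfolding sel_def by (rule someI_ex) (use F(2) that in auto)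
    have inj: "inj_on sel F" by (rule inj_on_inverseI[of _ a]) (use sel in auto)
    define S where "S = sel ` F"
    define \<mu> where "\<mu> u = w (a u)" for u
    have finS: "finite S" using F(1) by (simp add: S_def)
    have SU: "S \<subseteq> U" using sel by (auto simp: S_def)
    have mu: "\<forall>u\<in>S. 0 \<le> \<mu> u" using sel F(3) by (auto simp: S_def \<mu>_def)
    have reidx: "(\<Sum>u\<in>S. g u) = (\<Sum>v\<in>F. g (sel v))" for g :: "'m \<Rightarrow> 'b::comm_monoid_add"
      unfolding S_def by (rule sum.reindex[OF inj, unfolded o_def])
    have s1: "sum \<mu> S = 1" using F(4) sel unfolding reidx \<mu>_def by (auto intro: sum.cong)
    have sf: "(\<Sum>u\<in>S. \<mu> u *\<^sub>R f x u) = fst c"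
    proof -
      have "(\<Sum>u\<in>S. \<mu> u *\<^sub>R f x u) = (\<Sum>v\<in>F. w v *\<^sub>R fst v)"
        unfolding reidx \<mu>_def
      proof (rule sum.cong)
        fix v assume "v \<in> F"
        hence "a (sel v) = v" using sel by blast
        thus "w (a (sel v)) *\<^sub>R f x (sel v) = w v *\<^sub>R fst v" unfolding a_def by (metis fst_conv)
      qed simp
      also have "\<dots> = fst c" using F(5) by (auto simp: fst_sum)
      finally show ?thesis .
    qed
    have sL: "(\<Sum>u\<in>S. \<mu> u *\<^sub>R L x u) = snd c"
    proof -
      have "(\<Sum>u\<in>S. \<mu> u *\<^sub>R L x u) = (\<Sum>v\<in>F. w v *\<^sub>R snd v)"
        unfolding reidx \<mu>_def
      proof (rule sum.cong)
        fix v assume "v \<in> F"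
        hence "a (sel v) = v" using sel by blast
        thus "w (a (sel v)) *\<^sub>R L x (sel v) = w v *\<^sub>R snd v" unfolding a_def by (metis snd_conv)
      qed simp
      also have "\<dots> = snd c" using F(5) by (auto simp: snd_sum)
      finally show ?thesis .
    qed
    show "c \<in> G"
      using part2_core[OF t yc finS SU mu s1] unfolding sf sL G_def by simp
  qed
  hence "FL U f L x \<subseteq> G" unfolding FL_def Aeq by (rule closure_minimal[OF _ clG])
  hence "(fb, Lb) \<in> G" using fl by blast
  thus ?thesis unfolding G_def cont_deriv_def by simp
qed

lemma main: "gen_contingent_solution T U f L P V"
  unfolding gen_contingent_solution_def
proof (intro conjI)
  show "extremal_element_map T V P" by (rule extremal)
  show "\<forall>t\<in>{0..<T}. \<forall>x. \<forall>y\<in>V t x. \<exists>(fb, Lb)\<in>FL U f L x. - Lb \<in> cont_deriv T (upper V P) (t, x) y (1, fb)"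
    using part1_core V_sub by fastforce
  show "\<forall>t\<in>{0<..T}. \<forall>x. \<forall>y\<in>V t x. \<forall>(fb, Lb)\<in>FL U f L x. Lb \<in> cont_deriv T (upper V P) (t, x) y (- 1, - fb)"
    using part2 by fastforce
  show "\<forall>x. V T x = {0}" using V_T by blast
qed

end

theorem proposition7p1:
  fixes T :: real and U :: "(real^'m) set"
    and f :: "real^'n \<Rightarrow> real^'m \<Rightarrow> real^'n"
    and L :: "real^'n \<Rightarrow> real^'m \<Rightarrow> real^'p"
    and P :: "(real^'p) set"
    and Kf Mf KL BL :: real
  assumes "T > 0"
    and "U \<noteq> {}" and "compact U"
    and "continuous_on (UNIV \<times> U) (\<lambda>(x, u). f x u)"
    and "\<And>x1 x2 u. u \<in> U \<Longrightarrow> norm (f x1 u - f x2 u) \<le> Kf * norm (x1 - x2)"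
    and "\<And>x u. u \<in> U \<Longrightarrow> norm (f x u) \<le> Mf"
    and "continuous_on (UNIV \<times> U) (\<lambda>(x, u). L x u)"
    and "\<And>x u. u \<in> U \<Longrightarrow> norm (L x u) \<le> BL"
    and "\<And>x1 x2 u. u \<in> U \<Longrightarrow> norm (L x1 u - L x2 u) \<le> KL * norm (x1 - x2)"
    and "closed P" and "convex P" and "cone P" and "0 \<in> P"
    and "P \<inter> uminus ` P = {0}"
    and "interior P \<noteq> {}"
  shows "gen_contingent_solution T U f L P (Vmap T U f L P)"
proof -
  interpret moc_P T U f L Kf Mf KL BL P
    by unfold_locales (use assms in auto)
  show ?thesis by (rule main)
qed

end
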